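(* If $k$ is odd and $U$ is a $k$-unitrade, then $|U|$ is even.
   Context: A $k$-unitrade on a finite set $V$ is a set $U$ of $k$-element subsets (blocks) of $V$ such that every $(k-1)$-element subset of $V$ is contained in an even number of blocks of $U$. *)

theory Defs
  imports Main
begin

definition unitrade :: "nat \<Rightarrow> 'a set \<Rightarrow> 'a set set \<Rightarrow> bool" where
  "unitrade k V U \<longleftrightarrow>
     finite V \<and> (\<forall>B\<in>U. B \<subseteq> V \<and> card B = k) \<and>
     (\<forall>S. S \<subseteq> V \<longrightarrow> card S = k - 1 \<longrightarrow> even (card {B\<in>U. S \<subseteq> B}))"

end

theory Submission
  imports Defs
begin

theorem proposition11:
  fixes k :: nat and V :: "'a set" and U :: "'a set set"
  assumes "odd k" and "unitrade k V U"
  shows "even (card U)"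
proof -
  from assms(2) have fV: "finite V" and bl: "\<And>B. B \<in> U \<Longrightarrow> B \<subseteq> V \<and> card B = k"
    and ev: "\<And>S. S \<subseteq> V \<Longrightarrow> card S = k - 1 \<Longrightarrow> even (card {B\<in>U. S \<subseteq> B})"
    unfolding unitrade_def by auto
  have fU: "finite U" using bl fV by (meson PowI finite_Pow_iff finite_subset subsetI)
  define T where "T = {S. S \<subseteq> V \<and> card S = k - 1}"
  have fT: "finite T" unfolding T_def using fV by simp
  have k1: "k \<ge> 1" using assms(1) by (cases k) auto
  have cB: "card {S\<in>T. S \<subseteq> B} = k" if "B \<in> U" for B
  proof -
    have "{S\<in>T. S \<subseteq> B} = {S. S \<subseteq> B \<and> card S = k - 1}"
      using bl[OF that] unfolding T_def by auto
    moreover have "finite B" using bl[OF that] fV finite_subset by blast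
    ultimately have "card {S\<in>T. S \<subseteq> B} = card B choose (k - 1)" by (simp add: n_subsets)
    also have "\<dots> = k choose (k - (k - 1))" using bl[OF that]
      by (metis binomial_symmetric diff_le_self)
    also have "\<dots> = k" using k1 by simp
    finally show ?thesis .
  qed
  have "k * card U = (\<Sum>B\<in>U. card {S\<in>T. S \<subseteq> B})" using cB by simp
  also have "\<dots> = (\<Sum>B\<in>U. \<Sum>S\<in>T. if S \<subseteq> B then 1 else 0)"
    using fT by (simp add: sum.If_cases Collect_conj_eq Int_commute)
  also have "\<dots> = (\<Sum>S\<in>T. \<Sum>B\<in>U. if S \<subseteq> B then 1 else 0)" by (rule sum.swap)
  also have "\<dots> = (\<Sum>S\<in>T. card {B\<in>U. S \<subseteq> B})"
    using fU by (simp add: sum.If_cases Collect_conj_eq Int_commute)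
  finally have eq: "k * card U = (\<Sum>S\<in>T. card {B\<in>U. S \<subseteq> B})" .
  have "even (\<Sum>S\<in>T. card {B\<in>U. S \<subseteq> B})"
    by (rule dvd_sum) (auto simp: T_def intro: ev)
  then have "even (k * card U)" using eq by simp
  then show ?thesis using assms(1) by simp
qed

end
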